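(* Let $\bm{A}=[\bm{A}_1\ \bm{A}_2]\in\mathbb{R}^{m\times(n_1+n_2)}$ have full column rank with $\bm{A}_j^\top\bm{A}_j=\bm{I}_j$, $\bm{C}:=\bm{A}_2^\top\bm{A}_1\ne0$, and suppose $r:=\operatorname{rank}(\bm{C})<\min\{n_1,n_2\}$. Let $\gamma_1^*:=\frac{2}{1+\sqrt{1-\lambda_1(\bm{C}\bm{C}^\top)}}$ and $S_{11}:=[1,\infty)\times[1,\infty)$. Then $\rho(\bm{M}(\gamma_1^*,\gamma_1^* ))=\gamma_1^*-1$ and $\min_{(\gamma_1,\gamma_2)\in S_{11}}\rho(\bm{M}(\gamma_1,\gamma_2))=\gamma_1^*-1=\dfrac{1-\sqrt{1-\lambda_1(\bm{C}\bm{C}^\top)}}{1+\sqrt{1-\lambda_1(\bm{C}\bm{C}^\top)}}.$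
   Context: $\rho$: spectral radius; $\lambda_1$: largest eigenvalue. $\bm{M}(\gamma_1,\gamma_2)=\begin{bmatrix}(1-\gamma_1)\bm{I}_1&-\gamma_1\bm{C}^\top\\-\gamma_2(1-\gamma_1)\bm{C}&(1-\gamma_2)\bm{I}_2+\gamma_1\gamma_2\bm{C}\bm{C}^\top\end{bmatrix}$, the two-block gradient descent iteration matrix with stepsizes $\gamma_1,\gamma_2$. *)

theory Defs
  imports "Jordan_Normal_Form.Spectral_Radius" "Jordan_Normal_Form.DL_Rank"
begin

definition lambda_max :: "real mat \<Rightarrow> real" where
  "lambda_max B = Max {x. eigenvalue B x}"

definition rho :: "real mat \<Rightarrow> real" where
  "rho B = spectral_radius (map_mat complex_of_real B)"

definition iterM :: "real mat \<Rightarrow> real \<Rightarrow> real \<Rightarrow> real mat" where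
  "iterM C g1 g2 =
     (let n1 = dim_col C; n2 = dim_row C in
      four_block_mat
        ((1 - g1) \<cdot>\<^sub>m 1\<^sub>m n1)                    ((- g1) \<cdot>\<^sub>m transpose_mat C)
        ((- (g2 * (1 - g1))) \<cdot>\<^sub>m C)   ((1 - g2) \<cdot>\<^sub>m 1\<^sub>m n2 + (g1 * g2) \<cdot>\<^sub>m (C * transpose_mat C)))"

end

theory Submission
  imports Defs
begin

definition gM :: "'a::field mat \<Rightarrow> 'a \<Rightarrow> 'a \<Rightarrow> 'a mat" where
  "gM C g1 g2 =
     (let n1 = dim_col C; n2 = dim_row C in
      four_block_mat
        ((1 - g1) \<cdot>\<^sub>m 1\<^sub>m n1)                    ((- g1) \<cdot>\<^sub>m transpose_mat C)
        ((- (g2 * (1 - g1))) \<cdot>\<^sub>m C)   ((1 - g2) \<cdot>\<^sub>m 1\<^sub>m n2 + (g1 * g2) \<cdot>\<^sub>m (C * transpose_mat C)))"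

lemma iterM_gM: "iterM C g1 g2 = gM C g1 g2"
  unfolding iterM_def gM_def by simp

lemma gM_carrier: "C \<in> carrier_mat n2 n1 \<Longrightarrow> gM C g1 g2 \<in> carrier_mat (n1+n2) (n1+n2)"
  unfolding gM_def Let_def by (auto intro!: four_block_carrier_mat)

lemma smult_mat_mult_vec: "A \<in> carrier_mat nr nc \<Longrightarrow> v \<in> carrier_vec nc \<Longrightarrow>
   (k \<cdot>\<^sub>m A) *\<^sub>v v = k \<cdot>\<^sub>v (A *\<^sub>v v)"
  by (rule eq_vecI) (auto simp: scalar_prod_def sum_distrib_left ac_simps)

lemma map_gM: assumes C: "C \<in> carrier_mat n2 n1"
  shows "map_mat complex_of_real (gM C g1 g2) = gM (map_mat complex_of_real C) (of_real g1) (of_real g2)"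
proof -
  have CC: "map_mat complex_of_real (C * transpose_mat C) = map_mat complex_of_real C * transpose_mat (map_mat complex_of_real C)"
    using of_real_hom.mat_hom_mult[of C n2 n1 "transpose_mat C" n2] C by (simp add: map_mat_transpose)
  show ?thesis
    unfolding gM_def Let_def using C
    apply (subst map_four_block_mat[of _ n1 n1 _ n2 _ n2], auto)
    apply (rule cong_four_block_mat)
    apply (rule eq_matI, auto simp: scalar_prod_def)+
    done
qed

lemma gM_mult: fixes C :: "'a::field mat"
  assumes C: "C \<in> carrier_mat n2 n1" and x: "x \<in> carrier_vec n1" and y: "y \<in> carrier_vec n2"
  shows "gM C g1 g2 *\<^sub>v (x @\<^sub>v y) =
    ((1-g1) \<cdot>\<^sub>v x + (-g1) \<cdot>\<^sub>v (transpose_mat C *\<^sub>v y)) @\<^sub>v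
    ((-(g2*(1-g1))) \<cdot>\<^sub>v (C *\<^sub>v x) + (1-g2) \<cdot>\<^sub>v y + (g1*g2) \<cdot>\<^sub>v (C *\<^sub>v (transpose_mat C *\<^sub>v y)))"
proof -
  have Ct: "transpose_mat C \<in> carrier_mat n1 n2" using C by auto
  have CCt: "C * transpose_mat C \<in> carrier_mat n2 n2" using C by auto
  have e1: "((1-g1) \<cdot>\<^sub>m 1\<^sub>m n1) *\<^sub>v x = (1-g1) \<cdot>\<^sub>v x" using x by (simp add: smult_mat_mult_vec[of _ n1 n1])
  have e2: "((-g1) \<cdot>\<^sub>m transpose_mat C) *\<^sub>v y = (-g1) \<cdot>\<^sub>v (transpose_mat C *\<^sub>v y)" using y Ct by (simp add: smult_mat_mult_vec[of _ n1 n2])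
  have e3: "((-(g2*(1-g1))) \<cdot>\<^sub>m C) *\<^sub>v x = (-(g2*(1-g1))) \<cdot>\<^sub>v (C *\<^sub>v x)" using x C by (simp add: smult_mat_mult_vec[of _ n2 n1])
  have e4: "((1 - g2) \<cdot>\<^sub>m 1\<^sub>m n2 + (g1 * g2) \<cdot>\<^sub>m (C * transpose_mat C)) *\<^sub>v y = (1-g2) \<cdot>\<^sub>v y + (g1*g2) \<cdot>\<^sub>v (C *\<^sub>v (transpose_mat C *\<^sub>v y))"
    using y C Ct CCt by (simp add: add_mult_distrib_mat_vec[of _ n2 n2] smult_mat_mult_vec[of _ n2 n2])
  have "gM C g1 g2 = four_block_mat ((1 - g1) \<cdot>\<^sub>m 1\<^sub>m n1) ((- g1) \<cdot>\<^sub>m transpose_mat C)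
        ((- (g2 * (1 - g1))) \<cdot>\<^sub>m C) ((1 - g2) \<cdot>\<^sub>m 1\<^sub>m n2 + (g1 * g2) \<cdot>\<^sub>m (C * transpose_mat C))"
    unfolding gM_def Let_def using C by simp
  moreover have "four_block_mat ((1 - g1) \<cdot>\<^sub>m 1\<^sub>m n1) ((- g1) \<cdot>\<^sub>m transpose_mat C)
        ((- (g2 * (1 - g1))) \<cdot>\<^sub>m C) ((1 - g2) \<cdot>\<^sub>m 1\<^sub>m n2 + (g1 * g2) \<cdot>\<^sub>m (C * transpose_mat C)) *\<^sub>v (x @\<^sub>v y)
   = (((1-g1) \<cdot>\<^sub>m 1\<^sub>m n1) *\<^sub>v x + ((-g1) \<cdot>\<^sub>m transpose_mat C) *\<^sub>v y) @\<^sub>v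
     (((-(g2*(1-g1))) \<cdot>\<^sub>m C) *\<^sub>v x + ((1 - g2) \<cdot>\<^sub>m 1\<^sub>m n2 + (g1 * g2) \<cdot>\<^sub>m (C * transpose_mat C)) *\<^sub>v y)"
    by (rule four_block_mat_mult_vec, insert C Ct CCt x y, auto)
  ultimately show ?thesis unfolding e1 e2 e3 e4 using C x y by (simp add: assoc_add_vec[of _ n2])
qed
lemma map_CCt: assumes C: "C \<in> carrier_mat n2 n1"
  shows "map_mat complex_of_real (C * transpose_mat C) = map_mat complex_of_real C * transpose_mat (map_mat complex_of_real C)"
  by (rule eq_matI, insert C, auto simp: scalar_prod_def)

lemma conj_real_mat_vec: assumes A: "A \<in> carrier_mat nr nc" and v: "v \<in> carrier_vec nc"
  shows "conjugate (map_mat complex_of_real A *\<^sub>v v) = map_mat complex_of_real A *\<^sub>v conjugate v"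
  by (rule eq_vecI, insert A v, auto simp: scalar_prod_def sum_conjugate conjugate_dist_mul)

lemma eig_real_from_complex: fixes B :: "real mat"
  assumes B: "B \<in> carrier_mat n n" and t: "eigenvalue (map_mat complex_of_real B) (complex_of_real t)"
  shows "eigenvalue B t"
proof -
  have Bc: "map_mat complex_of_real B \<in> carrier_mat n n" using B by auto
  from t have "poly (char_poly (map_mat complex_of_real B)) (complex_of_real t) = 0"
    using eigenvalue_root_char_poly[OF Bc] by simp
  hence "complex_of_real (poly (char_poly B) t) = 0"
    unfolding of_real_hom.char_poly_hom[OF B] of_real_hom.poly_map_poly .
  hence "poly (char_poly B) t = 0" by simp
  thus ?thesis using eigenvalue_root_char_poly[OF B] by simp
qed

lemma real_eig: fixes C :: "real mat"
  assumes C: "C \<in> carrier_mat n2 n1"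
    and ev: "eigenvalue (map_mat complex_of_real (C * transpose_mat C)) \<mu>"
  shows "\<exists>t. \<mu> = complex_of_real t \<and> t \<ge> 0 \<and> eigenvalue (C * transpose_mat C) t"
proof -
  define Cc where "Cc = map_mat complex_of_real C"
  have Cc: "Cc \<in> carrier_mat n2 n1" using C Cc_def by auto
  have Cct: "transpose_mat Cc \<in> carrier_mat n1 n2" using Cc by auto
  from ev obtain y where y: "y \<in> carrier_vec n2" "y \<noteq> 0\<^sub>v n2"
    and eq: "(Cc * transpose_mat Cc) *\<^sub>v y = \<mu> \<cdot>\<^sub>v y"
    unfolding eigenvalue_def eigenvector_def map_CCt[OF C] Cc_def[symmetric] using Cc by auto
  define w where "w = transpose_mat Cc *\<^sub>v y"
  have w: "w \<in> carrier_vec n1" unfolding w_def using Cct y by auto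
  have "(Cc * transpose_mat Cc) *\<^sub>v y = Cc *\<^sub>v w" unfolding w_def
    using Cc Cct y by (simp add: assoc_mult_mat_vec[of _ n2 n1 _ n2])
  with eq have eq2: "Cc *\<^sub>v w = \<mu> \<cdot>\<^sub>v y" by simp
  have cw: "conjugate w = transpose_mat Cc *\<^sub>v conjugate y"
    unfolding w_def Cc_def map_mat_transpose using C y
    by (subst conj_real_mat_vec[of _ n1 n2], auto)
  have "(Cc *\<^sub>v w) \<bullet> conjugate y = conjugate y \<bullet> (Cc *\<^sub>v w)"
    using Cc w y by (subst comm_scalar_prod[of _ n2], auto)
  also have "\<dots> = (transpose_mat Cc *\<^sub>v conjugate y) \<bullet> w"
    using transpose_vec_mult_scalar[OF Cc w, of "conjugate y"] y by simp
  also have "\<dots> = conjugate w \<bullet> w" using cw by simp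
  also have "\<dots> = w \<bullet>c w" using conjugate_vec_sprod_comm[OF w w] by simp
  finally have key: "\<mu> * (y \<bullet>c y) = w \<bullet>c w" using eq2 y by simp
  have P: "y \<bullet>c y > 0" using y by simp
  have Q: "w \<bullet>c w \<ge> 0" by auto
  define p where "p = Re (y \<bullet>c y)"
  define q where "q = Re (w \<bullet>c w)"
  have pp: "y \<bullet>c y = complex_of_real p" "p > 0" using P unfolding p_def
    by (auto simp: less_complex_def complex_eq_iff)
  have qq: "w \<bullet>c w = complex_of_real q" "q \<ge> 0" using Q unfolding q_def
    by (auto simp: less_eq_complex_def complex_eq_iff)
  have mu: "\<mu> = complex_of_real (q / p)" using key pp qq
    by (simp add: field_simps)
  have "eigenvalue (C * transpose_mat C) (q/p)"
    by (rule eig_real_from_complex[of _ n2], insert C ev mu, auto)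
  thus ?thesis using mu pp qq by (intro exI[of _ "q/p"]) auto
qed

lemma self_sprod_ge0: "(v :: real vec) \<bullet> v \<ge> 0"
  using conjugate_square_ge_0_vec[of v] by simp

lemma proj_le: fixes A :: "real mat"
  assumes A: "A \<in> carrier_mat m n" and orth: "transpose_mat A * A = 1\<^sub>m n" and w: "w \<in> carrier_vec m"
  shows "(transpose_mat A *\<^sub>v w) \<bullet> (transpose_mat A *\<^sub>v w) \<le> w \<bullet> w"
proof -
  define q where "q = transpose_mat A *\<^sub>v w"
  define p where "p = A *\<^sub>v q"
  have q: "q \<in> carrier_vec n" using A w q_def by auto
  have p: "p \<in> carrier_vec m" using A q p_def by auto
  have At: "transpose_mat A \<in> carrier_mat n m" using A by auto
  have wp: "w \<bullet> p = q \<bullet> q" unfolding p_def q_def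
    using transpose_vec_mult_scalar[OF A _ w, of "transpose_mat A *\<^sub>v w"] A w by auto
  have "transpose_mat A *\<^sub>v p = q" unfolding p_def using A At q
    by (simp add: assoc_mult_mat_vec[of _ n m _ n, symmetric] orth)
  hence pp: "p \<bullet> p = q \<bullet> q"
    using transpose_vec_mult_scalar[OF A q p] unfolding p_def by simp
  have pw: "p \<bullet> w = w \<bullet> p" using comm_scalar_prod[OF p w] .
  have "0 \<le> (w - p) \<bullet> (w - p)" by (rule self_sprod_ge0)
  also have "\<dots> = w \<bullet> w - w \<bullet> p - (p \<bullet> w - p \<bullet> p)"
    using w p by (simp add: minus_scalar_prod_distrib[of _ m] scalar_prod_minus_distrib[of _ m])
  finally show ?thesis using wp pp pw q_def by simp
qed

lemma eig_CCt_bounds: fixes A1 A2 C :: "real mat"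
  assumes A1: "A1 \<in> carrier_mat m n1" and A2: "A2 \<in> carrier_mat m n2"
    and orth1: "transpose_mat A1 * A1 = 1\<^sub>m n1" and orth2: "transpose_mat A2 * A2 = 1\<^sub>m n2"
    and C_def: "C = transpose_mat A2 * A1"
    and ev: "eigenvalue (C * transpose_mat C) t"
  shows "0 \<le> t \<and> t \<le> 1"
proof -
  have C: "C \<in> carrier_mat n2 n1" using A1 A2 C_def by auto
  have Ct: "transpose_mat C \<in> carrier_mat n1 n2" using C by auto
  from ev obtain u where u: "u \<in> carrier_vec n2" "u \<noteq> 0\<^sub>v n2"
    and eq: "(C * transpose_mat C) *\<^sub>v u = t \<cdot>\<^sub>v u"
    unfolding eigenvalue_def eigenvector_def using C by auto
  define v where "v = transpose_mat C *\<^sub>v u"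
  have v: "v \<in> carrier_vec n1" using Ct u v_def by auto
  have "u \<bullet> ((C * transpose_mat C) *\<^sub>v u) = u \<bullet> (C *\<^sub>v v)"
    unfolding v_def using C Ct u by simp
  also have "\<dots> = v \<bullet> v" using transpose_vec_mult_scalar[OF C v u(1)] v_def by simp
  finally have key: "t * (u \<bullet> u) = v \<bullet> v" using eq u by simp
  have uu: "u \<bullet> u > 0" using u conjugate_square_greater_0_vec[of u n2] by simp
  have "v = transpose_mat A1 *\<^sub>v (A2 *\<^sub>v u)" unfolding v_def C_def
  proof -
    have "transpose_mat (transpose_mat A2 * A1) = transpose_mat A1 * A2"
      using transpose_mult[of "transpose_mat A2" n2 m A1 n1] A1 A2 by simp
    thus "transpose_mat (transpose_mat A2 * A1) *\<^sub>v u = transpose_mat A1 *\<^sub>v (A2 *\<^sub>v u)"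
      using A1 A2 u by (simp add: assoc_mult_mat_vec[of _ n1 m _ n2])
  qed
  hence "v \<bullet> v \<le> (A2 *\<^sub>v u) \<bullet> (A2 *\<^sub>v u)"
    using proj_le[OF A1 orth1, of "A2 *\<^sub>v u"] A2 u by auto
  also have "\<dots> = u \<bullet> u"
  proof -
    have "(A2 *\<^sub>v u) \<bullet> (A2 *\<^sub>v u) = (transpose_mat A2 *\<^sub>v (A2 *\<^sub>v u)) \<bullet> u"
      using transpose_vec_mult_scalar[OF A2 u(1), of "A2 *\<^sub>v u"] A2 u by simp
    also have "transpose_mat A2 *\<^sub>v (A2 *\<^sub>v u) = u"
      using A2 u by (simp add: assoc_mult_mat_vec[of _ n2 m _ n2, symmetric] orth2)
    finally show ?thesis .
  qed
  finally have "v \<bullet> v \<le> u \<bullet> u" .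
  moreover have "v \<bullet> v \<ge> 0" by (rule self_sprod_ge0)
  ultimately have "t * (u \<bullet> u) \<le> 1 * (u \<bullet> u)" "0 \<le> t * (u \<bullet> u)" using key by auto
  thus ?thesis using uu by (simp add: zero_le_mult_iff mult_le_cancel_right)
qed

lemma lam_max: fixes A1 A2 C :: "real mat"
  assumes A1: "A1 \<in> carrier_mat m n1" and A2: "A2 \<in> carrier_mat m n2"
    and orth1: "transpose_mat A1 * A1 = 1\<^sub>m n1" and orth2: "transpose_mat A2 * A2 = 1\<^sub>m n2"
    and C_def: "C = transpose_mat A2 * A1" and n2: "n2 > 0"
  shows "eigenvalue (C * transpose_mat C) (lambda_max (C * transpose_mat C))"
    "\<And>t. eigenvalue (C * transpose_mat C) t \<Longrightarrow> t \<le> lambda_max (C * transpose_mat C)"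
    "0 \<le> lambda_max (C * transpose_mat C)" "lambda_max (C * transpose_mat C) \<le> 1"
proof -
  have C: "C \<in> carrier_mat n2 n1" using A1 A2 C_def by auto
  have B: "C * transpose_mat C \<in> carrier_mat n2 n2" using C by auto
  let ?S = "{x. eigenvalue (C * transpose_mat C) x}"
  have fin: "finite ?S" using card_finite_spectrum(1)[OF B] unfolding spectrum_def .
  have Bc: "map_mat complex_of_real (C * transpose_mat C) \<in> carrier_mat n2 n2" using B by auto
  from spectrum_non_empty[OF Bc n2] obtain \<mu> where "eigenvalue (map_mat complex_of_real (C * transpose_mat C)) \<mu>"
    unfolding spectrum_def by auto
  from real_eig[OF C this] obtain t where "eigenvalue (C * transpose_mat C) t" by auto
  hence ne: "?S \<noteq> {}" by auto
  show mem: "eigenvalue (C * transpose_mat C) (lambda_max (C * transpose_mat C))"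
    unfolding lambda_max_def using Max_in[OF fin ne] by simp
  show "\<And>t. eigenvalue (C * transpose_mat C) t \<Longrightarrow> t \<le> lambda_max (C * transpose_mat C)"
    unfolding lambda_max_def using fin by simp
  show "0 \<le> lambda_max (C * transpose_mat C)" "lambda_max (C * transpose_mat C) \<le> 1"
    using eig_CCt_bounds[OF A1 A2 orth1 orth2 C_def mem] by auto
qed

lemma rho_ge: fixes M :: "real mat"
  assumes M: "M \<in> carrier_mat N N" and v: "v \<in> carrier_vec N" "v \<noteq> 0\<^sub>v N"
    and eq: "M *\<^sub>v v = \<mu> \<cdot>\<^sub>v v"
  shows "\<bar>\<mu>\<bar> \<le> rho M"
proof -
  have N: "N > 0" using v by (cases N, auto)
  have "eigenvalue M \<mu>" unfolding eigenvalue_def eigenvector_def using M v eq by auto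
  from of_real_hom.eigenvalue_hom[OF M this]
  have "complex_of_real \<mu> \<in> spectrum (map_mat complex_of_real M)" unfolding spectrum_def by simp
  hence "cmod (complex_of_real \<mu>) \<le> spectral_radius (map_mat complex_of_real M)"
    using spectral_radius_mem_max(2)[of "map_mat complex_of_real M" N "cmod (complex_of_real \<mu>)"] M N
    by (metis image_eqI map_carrier_mat)
  thus ?thesis unfolding rho_def by simp
qed

lemma rho_le: fixes M :: "real mat"
  assumes M: "M \<in> carrier_mat N N" and N: "N > 0"
    and b: "\<And>\<mu>. eigenvalue (map_mat complex_of_real M) \<mu> \<Longrightarrow> cmod \<mu> \<le> c"
  shows "rho M \<le> c"
proof -
  have Mc: "map_mat complex_of_real M \<in> carrier_mat N N" using M by auto
  from spectral_radius_mem_max(1)[OF Mc N] obtain \<mu> where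
    "\<mu> \<in> spectrum (map_mat complex_of_real M)" "spectral_radius (map_mat complex_of_real M) = cmod \<mu>" by auto
  thus ?thesis unfolding rho_def spectrum_def using b by auto
qed

lemma quad_root_mod: fixes \<mu> :: complex and b c :: real
  assumes c: "c \<ge> 0" and bb: "b^2 \<le> 4 * c^2"
    and eq: "\<mu>^2 + complex_of_real b * \<mu> + complex_of_real (c^2) = 0"
  shows "cmod \<mu> = c"
proof -
  define p where "p = Re \<mu>"
  define q where "q = Im \<mu>"
  have re: "p^2 - q^2 + b * p + c^2 = 0"
    using arg_cong[OF eq, of Re] unfolding p_def q_def by (simp add: power2_eq_square)
  have im: "2 * p * q + b * q = 0"
    using arg_cong[OF eq, of Im] unfolding p_def q_def by (simp add: power2_eq_square algebra_simps)
  have "p^2 + q^2 = c^2"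
  proof (cases "q = 0")
    case False
    have "q * (2*p + b) = 0" using im by (simp add: algebra_simps)
    hence b: "b = - 2 * p" using False by simp
    have "p^2 - q^2 + (- 2 * p) * p + c^2 = 0" using re unfolding b .
    thus ?thesis by (simp add: power2_eq_square algebra_simps)
  next
    case True
    with re have "(p + b/2)^2 = b^2/4 - c^2" by (simp add: power2_eq_square field_simps)
    moreover have "(p + b/2)^2 \<ge> 0" by simp
    ultimately have "(p + b/2)^2 = 0" "b^2 = 4 * c^2" using bb by auto
    hence "b = - 2 * p" by simp
    with \<open>b^2 = 4*c^2\<close> have "4 * p^2 = 4 * c^2" by (simp add: power2_eq_square)
    with True show ?thesis by simp
  qed
  thus ?thesis unfolding cmod_def p_def q_def using c by (simp add: real_sqrt_unique)
qed

lemma smult_append: "\<mu> \<cdot>\<^sub>v (x @\<^sub>v y) = (\<mu> \<cdot>\<^sub>v x) @\<^sub>v (\<mu> \<cdot>\<^sub>v y)"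
  by (rule eq_vecI) auto

lemma upper_eig: fixes C :: "real mat"
  assumes C: "C \<in> carrier_mat n2 n1" and g: "g \<ge> 1" and gs: "g^2 * s = 4 * (g - 1)"
    and tb: "\<And>t. eigenvalue (C * transpose_mat C) t \<Longrightarrow> t \<le> s"
    and ev: "eigenvalue (map_mat complex_of_real (gM C g g)) \<mu>"
  shows "cmod \<mu> \<le> g - 1"
proof -
  define Cc where "Cc = map_mat complex_of_real C"
  define G where "G = complex_of_real g"
  have Cc: "Cc \<in> carrier_mat n2 n1" using C Cc_def by auto
  have Cct: "transpose_mat Cc \<in> carrier_mat n1 n2" using Cc by auto
  have G0: "G \<noteq> 0" using g G_def by auto
  have Mc: "map_mat complex_of_real (gM C g g) = gM Cc G G" unfolding Cc_def G_def by (rule map_gM[OF C])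
  have Mcc: "gM Cc G G \<in> carrier_mat (n1+n2) (n1+n2)" using gM_carrier[OF Cc] .
  from ev obtain z where z: "z \<in> carrier_vec (n1+n2)" "z \<noteq> 0\<^sub>v (n1+n2)"
    and eqz: "gM Cc G G *\<^sub>v z = \<mu> \<cdot>\<^sub>v z"
    unfolding eigenvalue_def eigenvector_def Mc using Mcc by auto
  define x where "x = vec_first z n1"
  define y where "y = vec_last z n2"
  have x: "x \<in> carrier_vec n1" and y: "y \<in> carrier_vec n2" unfolding x_def y_def by auto
  have zxy: "z = x @\<^sub>v y" unfolding x_def y_def using z by simp
  define w where "w = transpose_mat Cc *\<^sub>v y"
  define v where "v = Cc *\<^sub>v x"
  have w: "w \<in> carrier_vec n1" and v: "v \<in> carrier_vec n2" unfolding w_def v_def using Cc Cct x y by auto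
  have "((1-G) \<cdot>\<^sub>v x + (-G) \<cdot>\<^sub>v w) @\<^sub>v
    ((-(G*(1-G))) \<cdot>\<^sub>v v + (1-G) \<cdot>\<^sub>v y + (G*G) \<cdot>\<^sub>v (Cc *\<^sub>v w)) = (\<mu> \<cdot>\<^sub>v x) @\<^sub>v (\<mu> \<cdot>\<^sub>v y)"
    using eqz unfolding zxy gM_mult[OF Cc x y] smult_append w_def v_def .
  hence E1: "(1-G) \<cdot>\<^sub>v x + (-G) \<cdot>\<^sub>v w = \<mu> \<cdot>\<^sub>v x"
    and E2: "(-(G*(1-G))) \<cdot>\<^sub>v v + (1-G) \<cdot>\<^sub>v y + (G*G) \<cdot>\<^sub>v (Cc *\<^sub>v w) = \<mu> \<cdot>\<^sub>v y"
    using x w by (subst (asm) append_vec_eq[of _ n1], auto)+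
  define a where "a = 1 - G - \<mu>"
  have E1i: "G * w $ i = a * x $ i" if i: "i < n1" for i
  proof -
    have "((1-G) \<cdot>\<^sub>v x + (-G) \<cdot>\<^sub>v w) $ i = (\<mu> \<cdot>\<^sub>v x) $ i" using E1 by simp
    thus ?thesis using i x w unfolding a_def by (simp add: algebra_simps)
  qed
  have hw: "w = (a/G) \<cdot>\<^sub>v x"
    by (rule eq_vecI, insert x w E1i G0, auto simp: field_simps)
  have Cw: "Cc *\<^sub>v w = (a/G) \<cdot>\<^sub>v v" unfolding hw v_def by (rule mult_mat_vec[OF Cc x])
  have R2: "a * y $ i = G * \<mu> * v $ i" if i: "i < n2" for i
  proof -
    have "((-(G*(1-G))) \<cdot>\<^sub>v v + (1-G) \<cdot>\<^sub>v y + (G*G) \<cdot>\<^sub>v (Cc *\<^sub>v w)) $ i = (\<mu> \<cdot>\<^sub>v y) $ i" using E2 by simp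
    hence "-(G*(1-G)) * v $ i + (1-G) * y $ i + G * (a * v $ i) = \<mu> * y $ i"
      using i v y G0 unfolding Cw by (simp add: algebra_simps)
    thus ?thesis using G0 unfolding a_def by (simp add: field_simps)
  qed
  show ?thesis
  proof (cases "a = 0 \<or> \<mu> = 0")
    case True
    thus ?thesis
    proof
      assume "a = 0"
      hence "\<mu> = complex_of_real (1 - g)" unfolding a_def G_def by simp
      hence "cmod \<mu> = \<bar>1 - g\<bar>" by (simp only: norm_of_real)
      thus ?thesis using g by simp
    next
      assume "\<mu> = 0" thus ?thesis using g by simp
    qed
  next
    case False
    hence a0: "a \<noteq> 0" and m0: "\<mu> \<noteq> 0" by auto
    have y0: "y \<noteq> 0\<^sub>v n2"
    proof
      assume y0: "y = 0\<^sub>v n2"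
      hence "w = 0\<^sub>v n1" unfolding w_def using Cct by (intro eq_vecI) (auto simp: scalar_prod_def)
      have "x = 0\<^sub>v n1"
      proof (rule eq_vecI)
        fix i assume "i < dim_vec (0\<^sub>v n1)"
        hence i: "i < n1" by simp
        have "a * x $ i = 0" using E1i[OF i] \<open>w = 0\<^sub>v n1\<close> i by simp
        thus "x $ i = 0\<^sub>v n1 $ i" using a0 i by simp
      qed (insert x, simp)
      with y0 have "z = 0\<^sub>v (n1+n2)" unfolding zxy by (intro eq_vecI) auto
      with z show False by simp
    qed
    define e where "e = a^2 / (G^2 * \<mu>)"
    have "(Cc * transpose_mat Cc) *\<^sub>v y = e \<cdot>\<^sub>v y"
    proof (rule eq_vecI)
      fix i assume "i < dim_vec (e \<cdot>\<^sub>v y)"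
      hence i: "i < n2" using y by simp
      have "(Cc * transpose_mat Cc) *\<^sub>v y = Cc *\<^sub>v w" unfolding w_def
        using Cc Cct y by (simp add: assoc_mult_mat_vec[of _ n2 n1 _ n2])
      hence "((Cc * transpose_mat Cc) *\<^sub>v y) $ i = (a/G) * v $ i" using Cw i v by simp
      also have "\<dots> = e * y $ i" using R2[OF i] G0 m0 unfolding e_def
        by (simp add: field_simps power2_eq_square)
      finally show "((Cc * transpose_mat Cc) *\<^sub>v y) $ i = (e \<cdot>\<^sub>v y) $ i" using i y by simp
    qed (insert Cc y, auto)
    hence "eigenvalue (map_mat complex_of_real (C * transpose_mat C)) e"
      unfolding eigenvalue_def eigenvector_def map_CCt[OF C] Cc_def[symmetric]
      using y y0 Cc by auto
    from real_eig[OF C this] obtain t where et: "e = complex_of_real t" "t \<ge> 0"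
      "eigenvalue (C * transpose_mat C) t" by auto
    have ts: "t \<le> s" using tb[OF et(3)] .
    define c where "c = g - 1"
    define b where "b = 2 * c - g^2 * t"
    have "a^2 = G^2 * \<mu> * e" unfolding e_def using G0 m0 by simp
    hence "(\<mu> + complex_of_real c)^2 = complex_of_real (g^2 * t) * \<mu>"
      unfolding a_def G_def c_def et(1) by (simp add: power2_eq_square algebra_simps)
    hence eq: "\<mu>^2 + complex_of_real b * \<mu> + complex_of_real (c^2) = 0"
      unfolding b_def by (simp add: power2_eq_square algebra_simps)
    have c0: "c \<ge> 0" using g c_def by simp
    have "g^2 * t \<ge> 0" using et(2) by simp
    moreover have "g^2 * t \<le> g^2 * s" using ts by (simp add: mult_left_mono)
    ultimately have "b - 2*c \<le> 0" "b + 2*c \<ge> 0" using gs unfolding b_def c_def by auto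
    hence "(b - 2*c) * (b + 2*c) \<le> 0" by (simp add: mult_nonpos_nonneg)
    hence bb: "b^2 \<le> 4 * c^2" by (simp add: power2_eq_square algebra_simps)
    show ?thesis using quad_root_mod[OF c0 bb eq] c_def by simp
  qed
qed

lemma (in vec_space) rank_mult_le:
  assumes A: "A \<in> carrier_mat n nc" and B: "B \<in> carrier_mat nc k"
  shows "rank (A * B) \<le> rank A"
proof -
  define W where "W = span (set (cols A))"
  have AB: "A * B \<in> carrier_mat n k" using A B by auto
  have "set (cols (A * B)) \<subseteq> W"
  proof
    fix x assume "x \<in> set (cols (A * B))"
    then obtain j where j: "j < k" "x = col (A * B) j" using AB
      by (metis cols_length cols_nth in_set_conv_nth carrier_matD(2))
    have "x = A *\<^sub>v col B j" unfolding j(2) by (rule col_mult2[OF A B j(1)])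
    moreover have "col B j \<in> carrier_vec nc" using B j by auto
    ultimately have "x \<in> col_space A" unfolding col_space_eq[OF A] using A by auto
    thus "x \<in> W" unfolding W_def col_space_def .
  qed
  have WV: "subspace class_ring W V"
    unfolding W_def using A by (metis cols_dim carrier_matD(1) span_is_subspace)
  hence "span (set (cols (A * B))) \<subseteq> W"
    by (simp add: \<open>set (cols (A * B)) \<subseteq> W\<close> span_is_subset)
  have "subspace class_ring (span (set (cols (A * B)))) V"
    by (metis AB cols_dim carrier_matD(1) span_is_subspace)
  have subspace: "subspace class_ring (span (set (cols (A * B)))) (vs W)"
    using nested_subspaces[OF WV \<open>subspace class_ring (span (set (cols (A * B)))) V\<close>
      \<open>span (set (cols (A * B))) \<subseteq> W\<close>] .
  have finW: "vectorspace.fin_dim class_ring (vs W)" unfolding W_def using fin_dim_span_cols[OF A] .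
  have finAB: "vectorspace.fin_dim class_ring (span_vs (set (cols (A * B))))"
    using fin_dim_span_cols[OF AB] .
  show ?thesis unfolding rank_def W_def[symmetric]
    using vectorspace.subspace_dim[OF subspace_is_vs[OF WV] subspace finW] finAB by auto
qed

lemma self_sprod_eq0: "(v :: real vec) \<in> carrier_vec n \<Longrightarrow> v \<bullet> v = 0 \<Longrightarrow> v = 0\<^sub>v n"
  using conjugate_square_eq_0_vec[of v n] by simp

lemma kernel_Ct: fixes C :: "real mat"
  assumes C: "C \<in> carrier_mat n2 n1" and r: "vec_space.rank n2 C < n2"
  shows "\<exists>y \<in> carrier_vec n2. y \<noteq> 0\<^sub>v n2 \<and> transpose_mat C *\<^sub>v y = 0\<^sub>v n1"
proof (rule ccontr)
  interpret vs: vec_space "TYPE(real)" n2 .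
  assume "\<not> ?thesis"
  hence inj: "\<And>y. y \<in> carrier_vec n2 \<Longrightarrow> transpose_mat C *\<^sub>v y = 0\<^sub>v n1 \<Longrightarrow> y = 0\<^sub>v n2" by auto
  have Ct: "transpose_mat C \<in> carrier_mat n1 n2" using C by auto
  have B: "C * transpose_mat C \<in> carrier_mat n2 n2" using C by auto
  have "det (C * transpose_mat C) \<noteq> 0"
  proof
    assume "det (C * transpose_mat C) = 0"
    then obtain y where y: "y \<in> carrier_vec n2" "y \<noteq> 0\<^sub>v n2" "(C * transpose_mat C) *\<^sub>v y = 0\<^sub>v n2"
      using det_0_iff_vec_prod_zero_field[OF B] by auto
    define w where "w = transpose_mat C *\<^sub>v y"
    have w: "w \<in> carrier_vec n1" using Ct y w_def by auto
    have "0 = y \<bullet> ((C * transpose_mat C) *\<^sub>v y)" using y by simp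
    also have "\<dots> = y \<bullet> (C *\<^sub>v w)" unfolding w_def using C Ct y by simp
    also have "\<dots> = w \<bullet> w" using transpose_vec_mult_scalar[OF C w y(1)] w_def by simp
    finally have "w = 0\<^sub>v n1" using self_sprod_eq0[OF w] by simp
    hence "y = 0\<^sub>v n2" using inj[OF y(1)] w_def by simp
    with y show False by simp
  qed
  hence "vs.rank (C * transpose_mat C) = n2" using vs.det_rank_iff[OF B] by simp
  moreover have "vs.rank (C * transpose_mat C) \<le> vs.rank C" by (rule vs.rank_mult_le[OF C Ct])
  ultimately show False using r by simp
qed

lemma kernel_C: fixes C :: "real mat"
  assumes C: "C \<in> carrier_mat n2 n1" and r: "vec_space.rank n2 C < n1"
  shows "\<exists>x \<in> carrier_vec n1. x \<noteq> 0\<^sub>v n1 \<and> C *\<^sub>v x = 0\<^sub>v n2"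
proof (rule ccontr)
  interpret vs: vec_space "TYPE(real)" n2 .
  assume "\<not> ?thesis"
  hence inj: "\<And>x. x \<in> carrier_vec n1 \<Longrightarrow> x \<noteq> 0\<^sub>v n1 \<Longrightarrow> C *\<^sub>v x \<noteq> 0\<^sub>v n2" by auto
  have dist: "distinct (cols C)"
  proof (rule ccontr)
    assume "\<not> distinct (cols C)"
    then obtain i j where ij: "i \<noteq> j" "cols C ! i = cols C ! j" "i < length (cols C)" "j < length (cols C)"
      using distinct_conv_nth by blast
    hence ij2: "col C i = col C j" "i < n1" "j < n1" using C by auto
    define v :: "real vec" where "v = vec n1 (\<lambda>k. (if k = i then 1 else 0) - (if k = j then 1 else 0))"
    have v: "v \<in> carrier_vec n1" unfolding v_def by auto
    have v0: "v \<noteq> 0\<^sub>v n1"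
    proof
      assume "v = 0\<^sub>v n1"
      hence "v $ i = 0" using ij2 by simp
      thus False unfolding v_def using ij ij2 by simp
    qed
    have "C *\<^sub>v v = 0\<^sub>v n2"
    proof (rule eq_vecI)
      fix r assume "r < dim_vec (0\<^sub>v n2)"
      hence r: "r < n2" by simp
      have "(C *\<^sub>v v) $ r = (\<Sum>k = 0..<n1. C $$ (r, k) * ((if k = i then 1 else 0) - (if k = j then 1 else 0)))"
        using C r unfolding v_def by (simp add: scalar_prod_def row_def)
      also have "\<dots> = (\<Sum>k = 0..<n1. (if k = i then C $$ (r, k) else 0) - (if k = j then C $$ (r, k) else 0))"
        by (rule sum.cong) auto
      also have "\<dots> = (\<Sum>k = 0..<n1. (if k = i then C $$ (r, k) else 0)) - (\<Sum>k = 0..<n1. (if k = j then C $$ (r, k) else 0))"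
        by (rule sum_subtractf)
      also have "\<dots> = C $$ (r, i) - C $$ (r, j)" using ij2 by simp
      also have "\<dots> = col C i $ r - col C j $ r" using C r ij2(2,3) by simp
      finally show "(C *\<^sub>v v) $ r = 0\<^sub>v n2 $ r" using ij2 r by simp
    qed (insert C, simp)
    with inj[OF v v0] show False by simp
  qed
  have "vs.lin_indpt (set (cols C))"
  proof
    assume "vs.lin_dep (set (cols C))"
    from vs.lin_depE[OF C this dist] obtain x where "x \<in> carrier_vec n1" "x \<noteq> 0\<^sub>v n1" "C *\<^sub>v x = 0\<^sub>v n2" .
    with inj show False by blast
  qed
  from vs.lin_indpt_full_rank[OF C dist this] r show False by simp
qed

lemma pc_nonpos: fixes c s dx dy :: real
  assumes c0: "0 \<le> c" and c1: "c \<le> 1" and hs: "s * (1+c)^2 = 4*c"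
    and x: "0 \<le> dx" "dx \<le> c" and y: "0 \<le> dy" "dy \<le> c"
  shows "c^2 - (2 - (1+dx) - (1+dy) + (1+dx)*(1+dy)*s) * c + (1 - (1+dx)) * (1 - (1+dy)) \<le> 0"
proof -
  have f1: "(c+dx)*(1+c) \<le> 2*c*(1+dx)"
  proof -
    have "2*c*(1+dx) - (c+dx)*(1+c) = (1-c)*(c-dx)" by (simp add: algebra_simps)
    also have "\<dots> \<ge> 0" using c1 x by simp
    finally show ?thesis by simp
  qed
  have f2: "(c+dy)*(1+c) \<le> 2*c*(1+dy)"
  proof -
    have "2*c*(1+dy) - (c+dy)*(1+c) = (1-c)*(c-dy)" by (simp add: algebra_simps)
    also have "\<dots> \<ge> 0" using c1 y by simp
    finally show ?thesis by simp
  qed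
  have "((c+dx)*(1+c)) * ((c+dy)*(1+c)) \<le> (2*c*(1+dx)) * (2*c*(1+dy))"
    by (rule mult_mono[OF f1 f2], insert c0 x y, auto)
  hence key: "(c+dx)*(c+dy)*(1+c)^2 \<le> c*(1+dx)*(1+dy)*(4*c)" by (simp add: power2_eq_square algebra_simps)
  have "(c^2 - (2 - (1+dx) - (1+dy) + (1+dx)*(1+dy)*s) * c + (1 - (1+dx)) * (1 - (1+dy))) * (1+c)^2
     = (c+dx)*(c+dy)*(1+c)^2 - c*(1+dx)*(1+dy)*(s*(1+c)^2)" by (simp add: power2_eq_square algebra_simps)
  also have "\<dots> \<le> 0" using key unfolding hs by simp
  finally have "(c^2 - (2 - (1+dx) - (1+dy) + (1+dx)*(1+dy)*s) * c + (1 - (1+dx)) * (1 - (1+dy))) * (1+c)^2 \<le> 0" .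
  moreover have "(1+c)^2 > 0" using c0 by simp
  ultimately show ?thesis by (simp add: mult_le_0_iff)
qed

lemma lower_bound: fixes C :: "real mat"
  assumes C: "C \<in> carrier_mat n2 n1"
    and kx: "x0 \<in> carrier_vec n1" "x0 \<noteq> 0\<^sub>v n1" "C *\<^sub>v x0 = 0\<^sub>v n2"
    and ky: "y0 \<in> carrier_vec n2" "y0 \<noteq> 0\<^sub>v n2" "transpose_mat C *\<^sub>v y0 = 0\<^sub>v n1"
    and es: "eigenvalue (C * transpose_mat C) s"
    and c0: "0 \<le> c" and c1: "c \<le> 1" and hs: "s * (1+c)^2 = 4*c"
    and g1: "g1 \<ge> 1" and g2: "g2 \<ge> 1"
  shows "c \<le> rho (gM C g1 g2)"
proof -
  have Ct: "transpose_mat C \<in> carrier_mat n1 n2" using C by auto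
  have M: "gM C g1 g2 \<in> carrier_mat (n1+n2) (n1+n2)" using gM_carrier[OF C] .
  have z1: "transpose_mat C *\<^sub>v 0\<^sub>v n2 = 0\<^sub>v n1" using Ct by (intro eq_vecI) (auto simp: scalar_prod_def)
  have z2: "C *\<^sub>v 0\<^sub>v n1 = 0\<^sub>v n2" using C by (intro eq_vecI) (auto simp: scalar_prod_def)
  have r1: "g1 - 1 \<le> rho (gM C g1 g2)"
  proof -
    have "gM C g1 g2 *\<^sub>v (x0 @\<^sub>v 0\<^sub>v n2) = (1 - g1) \<cdot>\<^sub>v (x0 @\<^sub>v 0\<^sub>v n2)"
      unfolding gM_mult[OF C kx(1) zero_carrier_vec] z1 kx(3) z2 smult_append
      using kx(1) by (intro arg_cong2[where f = append_vec] eq_vecI) auto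
    moreover have "x0 @\<^sub>v 0\<^sub>v n2 \<noteq> 0\<^sub>v (n1+n2)"
    proof
      assume "x0 @\<^sub>v 0\<^sub>v n2 = 0\<^sub>v (n1+n2)"
      hence "x0 @\<^sub>v 0\<^sub>v n2 = 0\<^sub>v n1 @\<^sub>v 0\<^sub>v n2" by (intro eq_vecI) auto
      hence "x0 = 0\<^sub>v n1" using kx(1) by (subst (asm) append_vec_eq[of _ n1]) auto
      with kx(2) show False by simp
    qed
    ultimately have "\<bar>1 - g1\<bar> \<le> rho (gM C g1 g2)"
      using rho_ge[OF M append_carrier_vec[OF kx(1) zero_carrier_vec]] by blast
    thus ?thesis by simp
  qed
  have r2: "g2 - 1 \<le> rho (gM C g1 g2)"
  proof -
    have "gM C g1 g2 *\<^sub>v (0\<^sub>v n1 @\<^sub>v y0) = (1 - g2) \<cdot>\<^sub>v (0\<^sub>v n1 @\<^sub>v y0)"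
      unfolding gM_mult[OF C zero_carrier_vec ky(1)] z1 ky(3) z2 smult_append
      using ky(1) by (intro arg_cong2[where f = append_vec] eq_vecI) auto
    moreover have "0\<^sub>v n1 @\<^sub>v y0 \<noteq> 0\<^sub>v (n1+n2)"
    proof
      assume "0\<^sub>v n1 @\<^sub>v y0 = 0\<^sub>v (n1+n2)"
      hence "0\<^sub>v n1 @\<^sub>v y0 = 0\<^sub>v n1 @\<^sub>v 0\<^sub>v n2" by (intro eq_vecI) auto
      hence "y0 = 0\<^sub>v n2" by (subst (asm) append_vec_eq[of _ n1]) auto
      with ky(2) show False by simp
    qed
    ultimately have "\<bar>1 - g2\<bar> \<le> rho (gM C g1 g2)"
      using rho_ge[OF M append_carrier_vec[OF zero_carrier_vec ky(1)]] by blast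
    thus ?thesis by simp
  qed
  show ?thesis
  proof (cases "g1 - 1 \<ge> c \<or> g2 - 1 \<ge> c")
    case True thus ?thesis using r1 r2 by auto
  next
    case False
    hence dx: "g1 - 1 < c" and dy: "g2 - 1 < c" by auto
    have cpos: "c > 0" using dx g1 by simp
    have spos: "s > 0" using hs cpos c0
      by (metis less_eq_real_def mult_eq_0_iff mult_pos_pos zero_less_numeral not_le
          power2_less_0 zero_le_mult_iff)
    from es obtain u where u: "u \<in> carrier_vec n2" "u \<noteq> 0\<^sub>v n2"
      and eu: "(C * transpose_mat C) *\<^sub>v u = s \<cdot>\<^sub>v u"
      unfolding eigenvalue_def eigenvector_def using C by auto
    define w where "w = transpose_mat C *\<^sub>v u"
    have w: "w \<in> carrier_vec n1" using Ct u w_def by auto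
    have Cw: "C *\<^sub>v w = s \<cdot>\<^sub>v u" using eu unfolding w_def using C Ct u by simp
    have w0: "w \<noteq> 0\<^sub>v n1"
    proof
      assume "w = 0\<^sub>v n1"
      hence "s \<cdot>\<^sub>v u = 0\<^sub>v n2" using Cw z2 by simp
      hence su: "s \<cdot>\<^sub>v u = 0\<^sub>v n2" .
      have "u = 0\<^sub>v n2"
      proof (rule eq_vecI)
        fix i assume "i < dim_vec (0\<^sub>v n2)"
        hence i: "i < n2" by simp
        have "(s \<cdot>\<^sub>v u) $ i = 0" using su i by simp
        hence "s * u $ i = 0" using i u(1) by simp
        thus "u $ i = 0\<^sub>v n2 $ i" using spos i by simp
      qed (insert u(1), simp)
      with u show False by simp
    qed
    define T where "T = 2 - g1 - g2 + g1 * g2 * s"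
    define D where "D = (1 - g1) * (1 - g2)"
    have pcn: "c^2 - T * c + D \<le> 0"
      using pc_nonpos[OF c0 c1 hs, of "g1 - 1" "g2 - 1"] g1 g2 dx dy unfolding T_def D_def by simp
    define P where "P = c^2 - T * c + D"
    define Q where "Q = T^2 - 4 * D"
    define R where "R = (2*c - T)^2"
    have PQR: "R = 4 * P + Q" unfolding P_def Q_def R_def by (simp add: power2_eq_square algebra_simps)
    have R0: "R \<ge> 0" unfolding R_def by simp
    have P0: "P \<le> 0" using pcn unfolding P_def .
    have disc: "T^2 - 4 * D \<ge> 0" using PQR R0 P0 unfolding Q_def by linarith
    have RQ: "(2*c - T)^2 \<le> T^2 - 4*D" using PQR R0 P0 unfolding Q_def R_def by linarith
    define \<mu> where "\<mu> = (T + sqrt (T^2 - 4*D)) / 2"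
    have pmu: "\<mu>^2 - T * \<mu> + D = 0"
    proof -
      have "(sqrt (T^2 - 4*D))^2 = T^2 - 4*D" using disc by simp
      thus ?thesis unfolding \<mu>_def by (simp add: power2_eq_square field_simps)
    qed
    have muc: "c \<le> \<mu>"
    proof -
      from RQ have "sqrt ((2*c - T)^2) \<le> sqrt (T^2 - 4*D)" by (rule real_sqrt_le_mono)
      hence "\<bar>2*c - T\<bar> \<le> sqrt (T^2 - 4*D)" by simp
      hence "2*c - T \<le> sqrt (T^2 - 4*D)" by linarith
      thus ?thesis unfolding \<mu>_def by (simp add: field_simps)
    qed
    define a where "a = 1 - g1 - \<mu>"
    define v where "v = (g1 \<cdot>\<^sub>v w) @\<^sub>v (a \<cdot>\<^sub>v u)"
    have v: "v \<in> carrier_vec (n1+n2)" unfolding v_def using w u by auto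
    have Ctu: "transpose_mat C *\<^sub>v (a \<cdot>\<^sub>v u) = a \<cdot>\<^sub>v w" unfolding w_def by (rule mult_mat_vec[OF Ct u(1)])
    have Cgw: "C *\<^sub>v (g1 \<cdot>\<^sub>v w) = g1 \<cdot>\<^sub>v (s \<cdot>\<^sub>v u)" using mult_mat_vec[OF C w] Cw by simp
    have Caw: "C *\<^sub>v (a \<cdot>\<^sub>v w) = a \<cdot>\<^sub>v (s \<cdot>\<^sub>v u)" using mult_mat_vec[OF C w] Cw by simp
    have "gM C g1 g2 *\<^sub>v v = \<mu> \<cdot>\<^sub>v v"
      unfolding v_def gM_mult[OF C smult_carrier_vec[THEN iffD2, OF w] smult_carrier_vec[THEN iffD2, OF u(1)]] Ctu Cgw Caw smult_append
    proof (intro arg_cong2[where f = append_vec])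
      show "(1 - g1) \<cdot>\<^sub>v (g1 \<cdot>\<^sub>v w) + - g1 \<cdot>\<^sub>v (a \<cdot>\<^sub>v w) = \<mu> \<cdot>\<^sub>v (g1 \<cdot>\<^sub>v w)"
        by (rule eq_vecI, insert w, auto simp: a_def algebra_simps)
      show "- (g2 * (1 - g1)) \<cdot>\<^sub>v (g1 \<cdot>\<^sub>v (s \<cdot>\<^sub>v u)) + (1 - g2) \<cdot>\<^sub>v (a \<cdot>\<^sub>v u) +
        (g1 * g2) \<cdot>\<^sub>v (a \<cdot>\<^sub>v (s \<cdot>\<^sub>v u)) = \<mu> \<cdot>\<^sub>v (a \<cdot>\<^sub>v u)"
      proof (rule eq_vecI)
        fix i assume "i < dim_vec (\<mu> \<cdot>\<^sub>v (a \<cdot>\<^sub>v u))"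
        hence i: "i < n2" using u by simp
        have id: "- (g2 * (1 - g1)) * (g1 * (s * u $ i)) + (1 - g2) * (a * u $ i) + (g1 * g2) * (a * (s * u $ i))
           = \<mu> * (a * u $ i) + (\<mu>^2 - T * \<mu> + D) * u $ i"
          unfolding a_def T_def D_def by (simp add: power2_eq_square algebra_simps)
        show "(- (g2 * (1 - g1)) \<cdot>\<^sub>v (g1 \<cdot>\<^sub>v (s \<cdot>\<^sub>v u)) + (1 - g2) \<cdot>\<^sub>v (a \<cdot>\<^sub>v u) +
          (g1 * g2) \<cdot>\<^sub>v (a \<cdot>\<^sub>v (s \<cdot>\<^sub>v u))) $ i = (\<mu> \<cdot>\<^sub>v (a \<cdot>\<^sub>v u)) $ i"
          using i u id pmu by simp
      qed (insert u, simp)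
    qed
    moreover have "v \<noteq> 0\<^sub>v (n1+n2)"
    proof
      assume v0: "v = 0\<^sub>v (n1+n2)"
      from w0 w obtain i where i: "i < n1" "w $ i \<noteq> 0" by (metis eq_vecI index_zero_vec carrier_vecD)
      have "v $ i = g1 * w $ i" unfolding v_def using i w u by simp
      moreover have "v $ i = 0" using v0 i by simp
      ultimately show False using i g1 by simp
    qed
    ultimately have "\<bar>\<mu>\<bar> \<le> rho (gM C g1 g2)" using rho_ge[OF M v] by auto
    thus ?thesis using muc by simp
  qed
qed

theorem mainTheorem15:
  fixes A1 A2 C :: "real mat" and m n1 n2 :: nat and gs :: real
  assumes A1: "A1 \<in> carrier_mat m n1"
    and A2: "A2 \<in> carrier_mat m n2"
    and full_rank: "vec_space.rank m (four_block_mat A1 A2 (0\<^sub>m 0 n1) (0\<^sub>m 0 n2)) = n1 + n2"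
    and orth1: "transpose_mat A1 * A1 = 1\<^sub>m n1"
    and orth2: "transpose_mat A2 * A2 = 1\<^sub>m n2"
    and C_def: "C = transpose_mat A2 * A1"
    and C_nz: "C \<noteq> 0\<^sub>m n2 n1"
    and rank_C: "vec_space.rank n2 C < min n1 n2"
    and gs_def: "gs = 2 / (1 + sqrt (1 - lambda_max (C * transpose_mat C)))"
  shows "rho (iterM C gs gs) = gs - 1
    \<and> (gs - 1) \<in> {rho (iterM C g1 g2) | g1 g2. g1 \<ge> 1 \<and> g2 \<ge> 1}
    \<and> (\<forall>g1 g2. g1 \<ge> 1 \<and> g2 \<ge> 1 \<longrightarrow> gs - 1 \<le> rho (iterM C g1 g2))
    \<and> gs - 1 = (1 - sqrt (1 - lambda_max (C * transpose_mat C)))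
                / (1 + sqrt (1 - lambda_max (C * transpose_mat C)))"
proof -
  define s where "s = lambda_max (C * transpose_mat C)"
  define r where "r = sqrt (1 - s)"
  define c where "c = gs - 1"
  have C: "C \<in> carrier_mat n2 n1" using A1 A2 C_def by auto
  have n1: "n1 > 0" and n2: "n2 > 0" using rank_C by auto
  note lm = lam_max[OF A1 A2 orth1 orth2 C_def n2, folded s_def]
  have s0: "0 \<le> s" and s1: "s \<le> 1" using lm by auto
  have r0: "0 \<le> r" and r1: "r \<le> 1" and rr: "r^2 = 1 - s" unfolding r_def using s0 s1 by auto
  have gsr: "gs = 2 / (1 + r)" unfolding gs_def r_def s_def ..
  have cr: "c = (1 - r) / (1 + r)" unfolding c_def gsr using r0 by (simp add: field_simps)
  have c0: "0 \<le> c" and c1: "c \<le> 1" unfolding cr using r0 r1 by (auto simp: field_simps)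
  have gs1: "gs \<ge> 1" using c0 c_def by simp
  have hs: "s * (1 + c)^2 = 4 * c"
  proof -
    have "s * (1 + c)^2 = (1 - r^2) * 4 / (1+r)^2" unfolding rr c_def gsr by (simp add: power_divide)
    also have "\<dots> = ((1-r)*4*(1+r)) / ((1+r)*(1+r))" by (simp add: power2_eq_square algebra_simps)
    also have "\<dots> = (1-r)*4/(1+r)" using r0 by (subst mult_divide_mult_cancel_right) auto
    also have "\<dots> = 4 * c" unfolding cr by simp
    finally show ?thesis .
  qed
  have hs2: "gs^2 * s = 4 * (gs - 1)" using hs unfolding c_def by (simp add: algebra_simps)
  obtain x0 where kx: "x0 \<in> carrier_vec n1" "x0 \<noteq> 0\<^sub>v n1" "C *\<^sub>v x0 = 0\<^sub>v n2"
    using kernel_C[OF C] rank_C by auto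
  obtain y0 where ky: "y0 \<in> carrier_vec n2" "y0 \<noteq> 0\<^sub>v n2" "transpose_mat C *\<^sub>v y0 = 0\<^sub>v n1"
    using kernel_Ct[OF C] rank_C by auto
  have low: "\<forall>g1 g2. g1 \<ge> 1 \<and> g2 \<ge> 1 \<longrightarrow> gs - 1 \<le> rho (iterM C g1 g2)"
    unfolding iterM_gM c_def[symmetric]
    using lower_bound[OF C kx ky lm(1) c0 c1 hs] by auto
  have up: "rho (iterM C gs gs) \<le> gs - 1"
    unfolding iterM_gM
    by (rule rho_le[OF gM_carrier[OF C]], insert n1, simp,
        rule upper_eig[OF C gs1 hs2 lm(2)], auto)
  have r1': "rho (iterM C gs gs) = gs - 1" using up low gs1 by force
  moreover have "(gs - 1) \<in> {rho (iterM C g1 g2) | g1 g2. g1 \<ge> 1 \<and> g2 \<ge> 1}"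
    using r1' gs1 by force
  moreover have "gs - 1 = (1 - sqrt (1 - lambda_max (C * transpose_mat C)))
                / (1 + sqrt (1 - lambda_max (C * transpose_mat C)))"
    using cr unfolding c_def r_def s_def .
  ultimately show ?thesis using low by blast
qed

end
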